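(* Let $\rho:\mathbb{R}\to\mathbb{R}$ be a nonlinearity and $\mathcal{J}$ a finite index set. Suppose that $\{(\alpha_s,\beta_s,\gamma_s)\}_{s\in\mathcal{J}}$ are triples of real numbers such that $\sum_{s\in\mathcal{J}}\alpha_s\rho(\beta_s\cdot+\gamma_s)$ is constant, and let $j^*\in\mathcal{J}$ be such that $\alpha_{j^*}\ne0$. Then there exist a set $\mathcal{I}\subset\mathcal{J}$ with $j^*\in\mathcal{I}$, real numbers $\{\tilde\alpha_s\}_{s\in\mathcal{I}}$ with $\tilde\alpha_{j^*}\ne0$, and $\zeta\in\mathbb{R}$ such that $(\zeta,\{(\tilde\alpha_s,\beta_s,\gamma_s)\}_{s\in\mathcal{I}})$ is an affine symmetry of $\rho$.
   Context: A nonlinearity is a continuous function $\rho:\mathbb{R}\to\mathbb{R}$ that is not of the form $t\mapsto at+b$. An affine symmetry of $\rho$ is a collection $(\zeta,\{(\alpha_s,\beta_s,\gamma_s)\}_{s\in\mathcal{I}})$ of reals, with $\mathcal{I}$ nonempty finite, such that $\sum_{s\in\mathcal{I}}\alpha_s\rho(\beta_st+\gamma_s)=\zeta$ for all $t\in\mathbb{R}$, and there is no proper subset $\mathcal{I}'\subsetneq\mathcal{I}$ for which $\{\rho(\beta_s\cdot+\gamma_s):s\in\mathcal{I}'\}\cup\{\mathbf1\}$ is linearly dependent ($\mathbf1$ the constant function $1$). *)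

theory Defs
  imports "HOL-Analysis.Analysis"
begin

definition nonlinearity :: "(real \<Rightarrow> real) \<Rightarrow> bool" where
  "nonlinearity \<rho> \<longleftrightarrow> continuous_on UNIV \<rho> \<and> \<not> (\<exists>a b. \<forall>t. \<rho> t = a * t + b)"

definition lin_dep_with_const ::
  "(real \<Rightarrow> real) \<Rightarrow> ('a \<Rightarrow> real) \<Rightarrow> ('a \<Rightarrow> real) \<Rightarrow> 'a set \<Rightarrow> bool" where
  "lin_dep_with_const \<rho> \<beta> \<gamma> I' \<longleftrightarrow>
     (\<exists>c c0. (c0 \<noteq> 0 \<or> (\<exists>s\<in>I'. c s \<noteq> 0)) \<and>
        (\<forall>t. (\<Sum>s\<in>I'. c s * \<rho> (\<beta> s * t + \<gamma> s)) + c0 = 0))"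

definition affine_symmetry ::
  "(real \<Rightarrow> real) \<Rightarrow> real \<Rightarrow> 'a set \<Rightarrow> ('a \<Rightarrow> real) \<Rightarrow> ('a \<Rightarrow> real) \<Rightarrow> ('a \<Rightarrow> real) \<Rightarrow> bool" where
  "affine_symmetry \<rho> \<zeta> I \<alpha> \<beta> \<gamma> \<longleftrightarrow>
     I \<noteq> {} \<and> finite I \<and>
     (\<forall>t. (\<Sum>s\<in>I. \<alpha> s * \<rho> (\<beta> s * t + \<gamma> s)) = \<zeta>) \<and>
     \<not> (\<exists>I'. I' \<subset> I \<and> lin_dep_with_const \<rho> \<beta> \<gamma> I')"

end

theory Submission
  imports Defs
begin

theorem lemma7:
  fixes \<rho> :: "real \<Rightarrow> real"
    and J :: "'a set"
    and \<alpha> \<beta> \<gamma> :: "'a \<Rightarrow> real"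
    and jstar :: 'a
  assumes "nonlinearity \<rho>"
    and "finite J"
    and "\<exists>C. \<forall>t. (\<Sum>s\<in>J. \<alpha> s * \<rho> (\<beta> s * t + \<gamma> s)) = C"
    and "jstar \<in> J"
    and "\<alpha> jstar \<noteq> 0"
  shows "\<exists>I \<alpha>' \<zeta>. I \<subseteq> J \<and> jstar \<in> I \<and> \<alpha>' jstar \<noteq> 0 \<and>
           affine_symmetry \<rho> \<zeta> I \<alpha>' \<beta> \<gamma>"
proof -
  define P where "P = (\<lambda>I. \<exists>\<alpha>' \<zeta>. I \<subseteq> J \<and> jstar \<in> I \<and> \<alpha>' jstar \<noteq> 0 \<and>
        (\<forall>t. (\<Sum>s\<in>I. \<alpha>' s * \<rho> (\<beta> s * t + \<gamma> s)) = \<zeta>))"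
  have "\<exists>n. \<exists>I. P I \<and> card I = n" using assms(3-5) unfolding P_def by blast
  then obtain n where n1: "\<exists>I. P I \<and> card I = n" and n2: "\<And>m. m < n \<Longrightarrow> \<not>(\<exists>I. P I \<and> card I = m)"
    using exists_least_iff[of "\<lambda>n. \<exists>I. P I \<and> card I = n"] by blast
  then obtain I where PI: "P I" and cI: "card I = n" by blast
  then obtain \<alpha>' \<zeta> where IJ: "I \<subseteq> J" and js: "jstar \<in> I" and aj: "\<alpha>' jstar \<noteq> 0"
    and sm: "\<And>t. (\<Sum>s\<in>I. \<alpha>' s * \<rho> (\<beta> s * t + \<gamma> s)) = \<zeta>" unfolding P_def by blast
  have fI: "finite I" using IJ assms(2) finite_subset by blast
  have "\<not> (\<exists>I'. I' \<subset> I \<and> lin_dep_with_const \<rho> \<beta> \<gamma> I')"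
  proof
    assume "\<exists>I'. I' \<subset> I \<and> lin_dep_with_const \<rho> \<beta> \<gamma> I'"
    then obtain I' c c0 where sub: "I' \<subset> I" and nz: "c0 \<noteq> 0 \<or> (\<exists>s\<in>I'. c s \<noteq> 0)"
      and eq: "\<And>t. (\<Sum>s\<in>I'. c s * \<rho> (\<beta> s * t + \<gamma> s)) + c0 = 0"
      unfolding lin_dep_with_const_def by blast
    have fI': "finite I'" using sub fI finite_subset by blast
    have "\<exists>s\<in>I'. c s \<noteq> 0"
    proof (rule ccontr)
      assume "\<not> (\<exists>s\<in>I'. c s \<noteq> 0)"
      then have "(\<Sum>s\<in>I'. c s * \<rho> (\<beta> s * 0 + \<gamma> s)) = 0" by simp
      then show False using eq[of 0] nz \<open>\<not> (\<exists>s\<in>I'. c s \<noteq> 0)\<close> by simp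
    qed
    then obtain s0 where s0: "s0 \<in> I'" "c s0 \<noteq> 0" by blast
    define c' where "c' = (\<lambda>s. if s \<in> I' then c s else 0)"
    have eq': "(\<Sum>s\<in>I. c' s * \<rho> (\<beta> s * t + \<gamma> s)) = - c0" for t
    proof -
      have "(\<Sum>s\<in>I. c' s * \<rho> (\<beta> s * t + \<gamma> s)) = (\<Sum>s\<in>I'. c' s * \<rho> (\<beta> s * t + \<gamma> s))"
        using sub fI by (intro sum.mono_neutral_right) (auto simp: c'_def)
      also have "\<dots> = (\<Sum>s\<in>I'. c s * \<rho> (\<beta> s * t + \<gamma> s))"
        by (intro sum.cong) (auto simp: c'_def)
      finally show ?thesis using eq[of t] by linarith
    qed
    show False
    proof (cases "c' jstar = 0")
      case False
      then have "jstar \<in> I'" "c jstar \<noteq> 0" by (auto simp: c'_def split: if_splits)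
      moreover have "I' \<subseteq> J" using sub IJ by blast
      moreover have "\<forall>t. (\<Sum>s\<in>I'. c s * \<rho> (\<beta> s * t + \<gamma> s)) = - c0" using eq by (simp add: eq_neg_iff_add_eq_0)
      ultimately have "P I'" unfolding P_def by blast
      moreover have "card I' < n" using cI sub fI psubset_card_mono by blast
      ultimately show False using n2 by blast
    next
      case True
      define k where "k = \<alpha>' s0 / c s0"
      define a2 where "a2 = (\<lambda>s. \<alpha>' s - k * c' s)"
      have s0I: "s0 \<in> I" using s0 sub by blast
      have a2s0: "a2 s0 = 0" using s0 by (simp add: a2_def c'_def k_def)
      have "s0 \<noteq> jstar" using True s0 by (auto simp: c'_def)
      have "(\<Sum>s\<in>I - {s0}. a2 s * \<rho> (\<beta> s * t + \<gamma> s)) = \<zeta> + k * c0" for t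
      proof -
        have "(\<Sum>s\<in>I - {s0}. a2 s * \<rho> (\<beta> s * t + \<gamma> s)) = (\<Sum>s\<in>I. a2 s * \<rho> (\<beta> s * t + \<gamma> s))"
          using fI s0I a2s0 by (intro sum.mono_neutral_left) auto
        also have "\<dots> = (\<Sum>s\<in>I. \<alpha>' s * \<rho> (\<beta> s * t + \<gamma> s)) - k * (\<Sum>s\<in>I. c' s * \<rho> (\<beta> s * t + \<gamma> s))"
          by (simp add: a2_def algebra_simps sum_subtractf sum_distrib_left)
        finally show ?thesis using sm[of t] eq'[of t] by simp
      qed
      moreover have "a2 jstar \<noteq> 0" using True aj by (simp add: a2_def)
      moreover have "jstar \<in> I - {s0}" using js \<open>s0 \<noteq> jstar\<close> by blast
      moreover have "I - {s0} \<subseteq> J" using IJ by blast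
      ultimately have "P (I - {s0})" unfolding P_def by blast
      moreover have "card (I - {s0}) < n" using cI s0I fI
        by (metis card_Diff1_less)
      ultimately show False using n2 by blast
    qed
  qed
  then have "affine_symmetry \<rho> \<zeta> I \<alpha>' \<beta> \<gamma>"
    unfolding affine_symmetry_def using js fI sm by blast
  then show ?thesis using IJ js aj by blast
qed

end
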